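(* Let $G$ be a finite simple graph of order $n$ having no connected component of order less than $3$, and let $\mathcal{G}$ be an arbitrary Abelian group of order at least $2n$. Then there exists a labeling $f\colon E(G)\to\mathcal{G}$ such that $f(e)\neq 0$ for every edge $e$, the weighted degrees $w_f(v)$, $v\in V(G)$, are pairwise distinct, and $w_f(v)\neq 0$ for every vertex $v$.
   Context: For an Abelian group $\mathcal{G}$ (written additively, with identity $0$) and a labeling $f\colon E(G)\to\mathcal{G}$, the weighted degree (weight) of a vertex $v$ is $w_f(v)=\sum_{u\in N(v)} f(uv)$, the sum taken in $\mathcal{G}$. *)

theory Defs
  imports Main
begin

definition simple_graph :: "'v set \<Rightarrow> 'v set set \<Rightarrow> bool" where
  "simple_graph V E \<longleftrightarrow> finite V \<and>
     (\<forall>e\<in>E. \<exists>u v. e = {u, v} \<and> u \<noteq> v \<and> u \<in> V \<and> v \<in> V)"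

definition adj :: "'v set set \<Rightarrow> 'v \<Rightarrow> 'v \<Rightarrow> bool" where
  "adj E u v \<longleftrightarrow> u \<noteq> v \<and> {u, v} \<in> E"

definition neighbors :: "'v set set \<Rightarrow> 'v \<Rightarrow> 'v set" where
  "neighbors E v = {u. adj E v u}"

definition component :: "'v set set \<Rightarrow> 'v \<Rightarrow> 'v set" where
  "component E v = {u. (adj E)\<^sup>*\<^sup>* v u}"

definition weight :: "'v set set \<Rightarrow> ('v set \<Rightarrow> 'a::comm_monoid_add) \<Rightarrow> 'v \<Rightarrow> 'a" where
  "weight E f v = (\<Sum>u\<in>neighbors E v. f {u, v})"

end

theory Submission
  imports Defs
begin


lemma nb_sym: "u \<in> neighbors E v \<longleftrightarrow> v \<in> neighbors E u"
  by (auto simp: neighbors_def adj_def insert_commute)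

lemma nb_iff: "u \<in> neighbors E v \<longleftrightarrow> u \<noteq> v \<and> {v,u} \<in> E"
  by (auto simp: neighbors_def adj_def)

lemma nb_subset: "simple_graph V E \<Longrightarrow> neighbors E v \<subseteq> V"
  unfolding simple_graph_def neighbors_def adj_def
  by (auto simp: doubleton_eq_iff)

lemma nb_finite: "simple_graph V E \<Longrightarrow> finite (neighbors E v)"
  using nb_subset[of V E v] by (meson finite_subset simple_graph_def)

lemma E_finite: "simple_graph V E \<Longrightarrow> finite E"
proof -
  assume a: "simple_graph V E"
  then have "E \<subseteq> Pow V" unfolding simple_graph_def by auto
  then show ?thesis using a unfolding simple_graph_def by (meson finite_Pow_iff finite_subset)
qed

definition ok :: "'v set \<Rightarrow> 'v set set \<Rightarrow> bool" where
"ok V E \<longleftrightarrow> (\<forall>v\<in>V. neighbors E v \<noteq> {} \<and>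
   (\<forall>u\<in>neighbors E v. 2 \<le> card (neighbors E u) \<or> 2 \<le> card (neighbors E v)))"

lemma comp_iso: assumes "neighbors E v = {}" shows "component E v = {v}"
proof -
  have "u = v" if "(adj E)\<^sup>*\<^sup>* v u" for u
    using that by (rule converse_rtranclpE) (use assms in \<open>auto simp: neighbors_def\<close>)
  then show ?thesis unfolding component_def by auto
qed

lemma comp_K2: assumes "neighbors E v = {u}" "neighbors E u = {v}"
  shows "component E v \<subseteq> {u,v}"
proof
  fix x assume "x \<in> component E v"
  then have "(adj E)\<^sup>*\<^sup>* v x" by (simp add: component_def)
  then show "x \<in> {u,v}"
  proof (induction rule: rtranclp_induct)
    case (step y z)
    then have "z \<in> neighbors E y" by (simp add: neighbors_def)
    with step assms show ?case by auto
  qed auto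
qed

lemma comp_ok:
  assumes sg: "simple_graph V E" and c: "\<forall>v\<in>V. card (component E v) \<ge> 3"
  shows "ok V E"
  unfolding ok_def
proof (intro ballI conjI)
  fix v assume v: "v \<in> V"
  show ne: "neighbors E v \<noteq> {}"
    using comp_iso[of E v] c v by fastforce
  fix u assume u: "u \<in> neighbors E v"
  show "2 \<le> card (neighbors E u) \<or> 2 \<le> card (neighbors E v)"
  proof (rule ccontr)
    assume "\<not> ?thesis"
    then have "card (neighbors E u) = 1" "card (neighbors E v) = 1"
      using u nb_sym[of u E v] nb_finite[OF sg] 
      by (metis One_nat_def card_0_eq empty_iff less_2_cases_iff not_le)+
    then obtain a b where "neighbors E u = {a}" "neighbors E v = {b}"
      by (meson card_1_singletonE)
    then have "neighbors E u = {v}" "neighbors E v = {u}"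
      using u nb_sym[of u E v] by auto
    then have "component E v \<subseteq> {u,v}" using comp_K2 by metis
    then have "card (component E v) \<le> card {u,v}" by (intro card_mono) auto
    also have "\<dots> \<le> 2" by (cases "u = v") auto
    finally have "card (component E v) \<le> 2" .
    then show False using c v by fastforce
  qed
qed

lemma nb_insert:
  assumes "u \<noteq> v"
  shows "neighbors (insert {u,v} E0) x =
    (if x = u then insert v (neighbors E0 x) else if x = v then insert u (neighbors E0 x)
     else neighbors E0 x)"
  using assms by (auto simp: neighbors_def adj_def doubleton_eq_iff)

lemma weight_insert:
  assumes "{u,v} \<notin> E0" "u \<noteq> v" "finite (neighbors E0 x)"
  shows "weight (insert {u,v} E0) (f({u,v} := g)) x = weight E0 f x + (if x \<in> {u,v} then g else 0)"
proof -
  have eq: "(\<Sum>y\<in>neighbors E0 x. (f({u,v} := g)) {y, x}) = weight E0 f x"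
    unfolding weight_def
  proof (rule sum.cong)
    fix y assume "y \<in> neighbors E0 x"
    then have "{x,y} \<in> E0" by (simp add: nb_iff)
    then have "{y,x} \<noteq> {u,v}" using assms(1) by (metis insert_commute)
    then show "(f({u,v} := g)) {y, x} = f {y,x}" by simp
  qed simp
  show ?thesis
  proof (cases "x = u")
    case True
    then have "v \<notin> neighbors E0 x" using assms by (simp add: nb_iff)
    then show ?thesis using True assms eq
      by (simp add: weight_def nb_insert insert_commute add.commute)
  next
    case F: False
    show ?thesis
    proof (cases "x = v")
      case True
      then have "u \<notin> neighbors E0 x" using assms by (simp add: nb_iff insert_commute)
      then show ?thesis using True assms eq
        by (simp add: weight_def nb_insert insert_commute add.commute)
    next
      case False
      then show ?thesis using F assms eq by (simp add: weight_def nb_insert)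
    qed
  qed
qed

definition big :: "'a itself \<Rightarrow> nat \<Rightarrow> bool" where
  "big T n \<longleftrightarrow> infinite (UNIV :: 'a set) \<or> 2 * n \<le> card (UNIV :: 'a set)"

lemma avoid:
  fixes S :: "'a set"
  assumes "big TYPE('a) n" "finite S" "card S < 2 * n"
  shows "\<exists>g. g \<notin> S"
proof (cases "finite (UNIV :: 'a set)")
  case True
  then have "card S < card (UNIV :: 'a set)" using assms by (auto simp: big_def)
  then have "S \<noteq> UNIV" by auto
  then show ?thesis by auto
next
  case False
  then show ?thesis using assms(2) by (meson ex_new_if_finite)
qed

definition good :: "'v set \<Rightarrow> 'v set set \<Rightarrow> ('v set \<Rightarrow> 'a::ab_group_add) \<Rightarrow> bool" where
  "good V E f \<longleftrightarrow> (\<forall>e\<in>E. f e \<noteq> 0) \<and> inj_on (weight E f) V \<and> (\<forall>v\<in>V. weight E f v \<noteq> 0)"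

lemma nb_mono: "E0 \<subseteq> E \<Longrightarrow> neighbors E0 x \<subseteq> neighbors E x"
  by (auto simp: neighbors_def adj_def)

lemma card_img_F:
  fixes w :: "'v \<Rightarrow> 'a::ab_group_add"
  assumes "finite A"
  shows "finite (insert 0 (w ` A))" "card (insert 0 (w ` A)) \<le> Suc (card A)"
  using assms by (auto intro!: card_insert_le_m1 le_SucI card_image_le simp: card_insert_if)

lemma step_edge:
  fixes f0 :: "'v set \<Rightarrow> 'a::ab_group_add"
  assumes sg: "simple_graph V E" and e: "{u,v} \<in> E" "u \<noteq> v" "u \<in> V" "v \<in> V"
    and g0: "good V (E - {{u,v}}) f0" and bg: "big TYPE('a) (card V)"
  shows "\<exists>f :: 'v set \<Rightarrow> 'a. good V E f"
proof -
  define E0 where "E0 = E - {{u,v}}"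
  define w where "w = weight E0 f0"
  have fV: "finite V" using sg by (simp add: simple_graph_def)
  define F where "F = insert 0 (w ` (V - {u,v}))"
  define S where "S = insert 0 ((\<lambda>y. y - w u) ` F \<union> (\<lambda>y. y - w v) ` F)"
  have cV: "card (V - {u,v}) = card V - 2" using e fV by (simp add: card_Diff_subset)
  have c2: "2 \<le> card V"
  proof -
    have "card {u,v} \<le> card V" using e fV by (intro card_mono) auto
    then show ?thesis using e by simp
  qed
  have fF: "finite F" "card F \<le> card V - 1"
    using card_img_F[of "V - {u,v}" w] fV cV c2 unfolding F_def by auto
  have "card S \<le> Suc (card ((\<lambda>y. y - w u) ` F \<union> (\<lambda>y. y - w v) ` F))"
    unfolding S_def using fF by (simp add: card_insert_le_m1 card_insert_if)
  also have "\<dots> \<le> Suc (card F + card F)"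
    using card_Un_le[of "(\<lambda>y. y - w u) ` F" "(\<lambda>y. y - w v) ` F"]
      card_image_le[OF fF(1), of "\<lambda>y. y - w u"] card_image_le[OF fF(1), of "\<lambda>y. y - w v"] by linarith
  also have "\<dots> < 2 * card V" using fF(2) c2 by linarith
  finally have cS: "card S < 2 * card V" .
  have "finite S" using fF unfolding S_def by simp
  then obtain g where g: "g \<notin> S" using avoid[OF bg _ cS] by blast
  define f where "f = f0({u,v} := g)"
  have EE: "E = insert {u,v} E0" using e unfolding E0_def by auto
  have W: "weight E f x = w x + (if x \<in> {u,v} then g else 0)" for x
  proof -
    have "finite (neighbors E0 x)"
      using nb_finite[OF sg, of x] nb_mono[of E0 E x] unfolding E0_def by (meson Diff_subset finite_subset)
    then show ?thesis unfolding EE f_def w_def by (intro weight_insert) (auto simp: E0_def e)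
  qed
  have sub: "(\<lambda>y. y - w u) ` F \<subseteq> S" "(\<lambda>y. y - w v) ` F \<subseteq> S" "0 \<in> S" "0 \<in> F"
    unfolding S_def F_def by auto
  have g1: "g \<noteq> 0" "w u + g \<noteq> 0" "w v + g \<noteq> 0"
  proof -
    show "g \<noteq> 0" using g sub by auto
    show "w u + g \<noteq> 0"
    proof
      assume h: "w u + g = 0"
      have "g = 0 - w u" using h by (metis add_diff_cancel_left')
      then show False using g sub by blast
    qed
    show "w v + g \<noteq> 0"
    proof
      assume h: "w v + g = 0"
      have "g = 0 - w v" using h by (metis add_diff_cancel_left')
      then show False using g sub by blast
    qed
  qed
  have g2: "w u + g \<noteq> w y" "w v + g \<noteq> w y" if y: "y \<in> V - {u,v}" for y
  proof -
    have "w y \<in> F" using y unfolding F_def by auto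
    show "w u + g \<noteq> w y"
    proof
      assume h: "w u + g = w y"
      have "g = w y - w u" using h by (metis add_diff_cancel_left')
      then show False using g sub \<open>w y \<in> F\<close> by blast
    qed
    show "w v + g \<noteq> w y"
    proof
      assume h: "w v + g = w y"
      have "g = w y - w v" using h by (metis add_diff_cancel_left')
      then show False using g sub \<open>w y \<in> F\<close> by blast
    qed
  qed
  have G: "good V E0 f0" using g0 unfolding E0_def .
  have "good V E f"
      unfolding good_def
    proof (intro conjI ballI)
      fix e' assume "e' \<in> E" then show "f e' \<noteq> 0"
        using G g1 unfolding good_def f_def EE by auto
    next
      fix x assume "x \<in> V" then show "weight E f x \<noteq> 0"
        using G g1 unfolding good_def W w_def by auto
    next
      show "inj_on (weight E f) V"
      proof (rule inj_onI)
        fix x y assume xy: "x \<in> V" "y \<in> V" "weight E f x = weight E f y"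
        have inj: "inj_on w V" using G unfolding good_def w_def by simp
        show "x = y"
          using xy g2[of x] g2[of y] inj unfolding W
          by (auto simp: inj_on_def split: if_splits) 
      qed
    qed
  then show ?thesis by blast
qed

lemma step_leaf:
  fixes f0 :: "'v set \<Rightarrow> 'a::ab_group_add"
  assumes sg: "simple_graph V E" and l: "l \<in> V" "neighbors E l = {p}"
    and g0: "good (V - {l}) (E - {{l,p}}) f0" and bg: "big TYPE('a) (card V)"
  shows "\<exists>f :: 'v set \<Rightarrow> 'a. good V E f"
proof -
  define E0 where "E0 = E - {{l,p}}"
  define V0 where "V0 = V - {l}"
  define w where "w = weight E0 f0"
  have fV: "finite V" using sg by (simp add: simple_graph_def)
  have pl: "p \<noteq> l" "{l,p} \<in> E" using l(2) by (auto simp: nb_iff)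
  have pV: "p \<in> V" using nb_subset[OF sg, of l] l by auto
  have wl: "w l = 0"
  proof -
    have "neighbors E0 l = {}" using l(2) unfolding E0_def by (auto simp: nb_iff)
    then show ?thesis unfolding w_def weight_def by simp
  qed
  define F where "F = insert 0 (w ` (V0 - {p}))"
  define S where "S = F \<union> (\<lambda>y. y - w p) ` F"
  have c2: "2 \<le> card V"
  proof -
    have "card {l,p} \<le> card V" using l pV fV by (intro card_mono) auto
    then show ?thesis using pl by simp
  qed
  have cV: "card (V0 - {p}) = card V - 2" using l pV pl fV unfolding V0_def by (simp add: card_Diff_subset)
  have fF: "finite F" "card F \<le> card V - 1"
    using card_img_F[of "V0 - {p}" w] fV cV c2 unfolding F_def V0_def by auto
  have "card S \<le> card F + card F"
    unfolding S_def using card_Un_le[of F "(\<lambda>y. y - w p) ` F"]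
      card_image_le[OF fF(1), of "\<lambda>y. y - w p"] by linarith
  also have "\<dots> < 2 * card V" using fF(2) c2 by linarith
  finally have cS: "card S < 2 * card V" .
  have "finite S" using fF unfolding S_def by simp
  then obtain g where g: "g \<notin> S" using avoid[OF bg _ cS] by blast
  define f where "f = f0({l,p} := g)"
  have EE: "E = insert {l,p} E0" using pl unfolding E0_def by auto
  have W: "weight E f x = w x + (if x \<in> {l,p} then g else 0)" for x
  proof -
    have "finite (neighbors E0 x)"
      using nb_finite[OF sg, of x] nb_mono[of E0 E x] unfolding E0_def by (meson Diff_subset finite_subset)
    then show ?thesis unfolding EE f_def w_def by (intro weight_insert) (use pl in \<open>auto simp: E0_def\<close>)
  qed
  have sub: "(\<lambda>y. y - w p) ` F \<subseteq> S" "F \<subseteq> S" "0 \<in> F"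
    unfolding S_def F_def by auto
  have G: "good V0 E0 f0" using g0 unfolding E0_def V0_def .
  have wp: "w p \<noteq> 0" using G pV pl unfolding good_def w_def V0_def by auto
  have g1: "g \<noteq> 0" "w p + g \<noteq> 0"
  proof -
    show "g \<noteq> 0" using g sub by auto
    show "w p + g \<noteq> 0"
    proof
      assume h: "w p + g = 0"
      have "g = 0 - w p" using h by (metis add_diff_cancel_left')
      then show False using g sub by blast
    qed
  qed
  have g2: "w p + g \<noteq> w y" "g \<noteq> w y" if y: "y \<in> V0 - {p}" for y
  proof -
    have "w y \<in> F" using y unfolding F_def by auto
    show "w p + g \<noteq> w y"
    proof
      assume h: "w p + g = w y"
      have "g = w y - w p" using h by (metis add_diff_cancel_left')
      then show False using g sub \<open>w y \<in> F\<close> by blast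
    qed
    show "g \<noteq> w y" using g sub \<open>w y \<in> F\<close> by blast
  qed
  have g3: "g \<noteq> w p + g" using wp by simp
  have "good V E f"
    unfolding good_def
  proof (intro conjI ballI)
    fix e' assume "e' \<in> E" then show "f e' \<noteq> 0"
      using G g1 unfolding good_def f_def EE by auto
  next
    fix x assume "x \<in> V" then show "weight E f x \<noteq> 0"
      using G g1 wl unfolding good_def W w_def V0_def by auto
  next
    show "inj_on (weight E f) V"
    proof (rule inj_onI)
      fix x y assume xy: "x \<in> V" "y \<in> V" "weight E f x = weight E f y"
      have inj: "inj_on w V0" using G unfolding good_def w_def by simp
      show "x = y"
        using xy g2[of x] g2[of y] g3 inj wl unfolding W V0_def
        by (auto simp: inj_on_def split: if_splits) 
    qed
  qed
  then show ?thesis by blast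
qed

lemma step_P3:
  fixes f0 :: "'v set \<Rightarrow> 'a::ab_group_add"
  assumes sg: "simple_graph V E" and abc: "a \<in> V" "b \<in> V" "c \<in> V" "a \<noteq> b"
    "neighbors E a = {c}" "neighbors E b = {c}" "neighbors E c = {a,b}"
    and g0: "good (V - {a,b,c}) (E - {{a,c},{b,c}}) f0" and bg: "big TYPE('a) (card V)"
  shows "\<exists>f :: 'v set \<Rightarrow> 'a. good V E f"
proof -
  define E0 where "E0 = E - {{a,c},{b,c}}"
  define E1 where "E1 = insert {a,c} E0"
  define V0 where "V0 = V - {a,b,c}"
  define w where "w = weight E0 f0"
  have fV: "finite V" using sg by (simp add: simple_graph_def)
  have d: "a \<noteq> c" "b \<noteq> c" "c \<noteq> a" "c \<noteq> b" "{a,c} \<in> E" "{b,c} \<in> E"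
    using abc(5,6) by (auto simp: nb_iff insert_commute)
  have w0: "w a = 0" "w b = 0" "w c = 0"
  proof -
    have "neighbors E0 a = {}" "neighbors E0 b = {}" "neighbors E0 c = {}"
      using abc(5,6,7) unfolding E0_def by (auto simp: nb_iff insert_commute)
    then show "w a = 0" "w b = 0" "w c = 0" unfolding w_def weight_def by simp_all
  qed
  define F where "F = insert 0 (w ` V0)"
  have c3: "3 \<le> card V"
  proof -
    have "card {a,b,c} \<le> card V" using abc fV by (intro card_mono) auto
    then show ?thesis using d abc by simp
  qed
  have cV: "card V0 = card V - 3" using abc d fV unfolding V0_def by (simp add: card_Diff_subset)
  have fF: "finite F" "card F \<le> card V - 2"
    using card_img_F[of "V0" w] fV cV c3 unfolding F_def V0_def by auto
  have "card F < 2 * card V" using fF c3 by linarith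
  then obtain x where x: "x \<notin> F" using avoid[OF bg fF(1)] by blast
  define S where "S = insert x (F \<union> (\<lambda>z. z - x) ` F)"
  have "card S \<le> Suc (card F + card F)"
    unfolding S_def using card_Un_le[of F "(\<lambda>z. z - x) ` F"] fF
      card_image_le[OF fF(1), of "\<lambda>z. z - x"] by (simp add: card_insert_if)
  also have "\<dots> < 2 * card V" using fF(2) c3 by linarith
  finally have cS: "card S < 2 * card V" .
  have "finite S" using fF unfolding S_def by simp
  then obtain y where y: "y \<notin> S" using avoid[OF bg _ cS] by blast
  define f1 where "f1 = f0({a,c} := x)"
  define f where "f = f1({b,c} := y)"
  have EE: "E = insert {b,c} E1" using d unfolding E1_def E0_def by auto
  have ne: "{b,c} \<noteq> {a,c}" using abc d by (auto simp: doubleton_eq_iff)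
  have fin0: "finite (neighbors E0 z)" for z
      using nb_finite[OF sg, of z] nb_mono[of E0 E z] unfolding E0_def by (meson Diff_subset finite_subset)
  have fin1: "finite (neighbors E1 z)" for z
      using nb_finite[OF sg, of z] nb_mono[of E1 E z] EE by (meson subset_insertI finite_subset)
  have W1: "weight E1 f1 z = w z + (if z \<in> {a,c} then x else 0)" for z
    unfolding E1_def f1_def w_def by (intro weight_insert fin0) (use d in \<open>auto simp: E0_def\<close>)
  have W: "weight E f z = w z + (if z \<in> {a,c} then x else 0) + (if z \<in> {b,c} then y else 0)" for z
    unfolding EE f_def W1[symmetric] by (intro weight_insert fin1) (use d ne in \<open>auto simp: E1_def E0_def\<close>)
  have sub: "(\<lambda>z. z - x) ` F \<subseteq> S" "F \<subseteq> S" "0 \<in> F" "x \<in> S"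
    unfolding S_def F_def by auto
  have G: "good V0 E0 f0" using g0 unfolding E0_def V0_def .
  have g1: "x \<noteq> 0" "y \<noteq> 0" "x + y \<noteq> 0" "x \<noteq> y"
  proof -
    show "x \<noteq> 0" using x sub by auto
    show "y \<noteq> 0" using y sub by auto
    show "x \<noteq> y" using y sub by auto
    show "x + y \<noteq> 0"
    proof
      assume h: "x + y = 0"
      have "y = 0 - x" using h by (metis add_diff_cancel_left')
      then show False using y sub by blast
    qed
  qed
  have g2: "x + y \<noteq> w z" "x \<noteq> w z" "y \<noteq> w z" if z: "z \<in> V0" for z
  proof -
    have "w z \<in> F" using z unfolding F_def by auto
    show "x + y \<noteq> w z"
    proof
      assume h: "x + y = w z"
      have "y = w z - x" using h by (metis add_diff_cancel_left')
      then show False using y sub \<open>w z \<in> F\<close> by blast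
    qed
    show "x \<noteq> w z" using x \<open>w z \<in> F\<close> by blast
    show "y \<noteq> w z" using y sub \<open>w z \<in> F\<close> by blast
  qed
  have g3: "x \<noteq> x + y" "y \<noteq> x + y" using g1 by (simp_all add: add.commute)
  have Wa: "weight E f a = x" "weight E f b = y" "weight E f c = x + y"
    using W[of a] W[of b] W[of c] w0 abc d by auto
  have Wz: "weight E f z = w z" if "z \<in> V0" for z
    using W[of z] that unfolding V0_def by auto
  have Vs: "V = V0 \<union> {a,b,c}" using abc unfolding V0_def by auto
  have "good V E f"
    unfolding good_def
  proof (intro conjI ballI)
    fix e' assume "e' \<in> E" then show "f e' \<noteq> 0"
      using G g1 ne unfolding good_def f_def f1_def EE E1_def by auto
  next
    fix z assume "z \<in> V" then show "weight E f z \<noteq> 0"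
      using G g1 Wa Wz unfolding good_def w_def Vs by auto
  next
    show "inj_on (weight E f) V"
    proof (rule inj_onI)
      fix z z' assume zz: "z \<in> V" "z' \<in> V" "weight E f z = weight E f z'"
      have inj: "inj_on w V0" using G unfolding good_def w_def by simp
      show "z = z'"
        using zz g1 g2[of z] g2[of z'] g3 inj Wa Wz[of z] Wz[of z'] unfolding Vs
        by (auto simp: inj_on_def) 
    qed
  qed
  then show ?thesis by blast
qed



lemma sg_sub: "simple_graph V E \<Longrightarrow> E0 \<subseteq> E \<Longrightarrow> simple_graph V E0"
  unfolding simple_graph_def by blast

lemma sg_del:
  assumes "simple_graph V E" "E0 \<subseteq> E" "\<forall>e\<in>E0. e \<inter> X = {}"
  shows "simple_graph (V - X) E0"
  unfolding simple_graph_def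
proof (intro conjI ballI)
  show "finite (V - X)" using assms(1) by (simp add: simple_graph_def)
  fix e assume e: "e \<in> E0"
  then have "e \<in> E" using assms(2) by auto
  then obtain u v where uv: "e = {u,v}" "u \<noteq> v" "u \<in> V" "v \<in> V"
    using assms(1) unfolding simple_graph_def by blast
  have "u \<notin> X" "v \<notin> X" using assms(3) e uv(1) by auto
  then show "\<exists>u v. e = {u, v} \<and> u \<noteq> v \<and> u \<in> V - X \<and> v \<in> V - X" using uv by blast
qed

lemma nb_remove:
  assumes "u \<noteq> v"
  shows "neighbors (E - {{u,v}}) x =
    (if x = u then neighbors E x - {v} else if x = v then neighbors E x - {u} else neighbors E x)"
  using assms by (auto simp: nb_iff doubleton_eq_iff)

lemma card2_ne: assumes "finite A" "2 \<le> card A" shows "A - {v} \<noteq> {}"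
proof
  assume "A - {v} = {}"
  then have "A \<subseteq> {v}" by auto
  then have "card A \<le> card {v}" by (intro card_mono) auto
  then show False using assms by simp
qed

lemma card_minus1: "finite A \<Longrightarrow> v \<in> A \<Longrightarrow> card (A - {v}) = card A - 1"
  by (simp add: card_Diff_singleton)

lemma edge_removable:
  assumes sg: "simple_graph V E" and okE: "ok V E" and e: "{u,v} \<in> E" "u \<noteq> v"
    and du: "2 \<le> card (neighbors E u)" and dv: "2 \<le> card (neighbors E v)"
    and cu: "card (neighbors E u) = 2 \<Longrightarrow> \<forall>q\<in>neighbors E u - {v}. 2 \<le> card (neighbors E q)"
    and cv: "card (neighbors E v) = 2 \<Longrightarrow> \<forall>q\<in>neighbors E v - {u}. 2 \<le> card (neighbors E q)"
  shows "ok V (E - {{u,v}})"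
proof -
  let ?N = "neighbors E" and ?N' = "neighbors (E - {{u,v}})"
  have fin: "finite (?N z)" for z using nb_finite[OF sg] .
  have vu: "v \<in> ?N u" "u \<in> ?N v" using e by (auto simp: nb_iff insert_commute)
  have P_other: "card (?N' z) = card (?N z)" if "z \<noteq> u" "z \<noteq> v" for z
    using that e by (simp add: nb_remove)
  have P_u: "card (?N' u) = card (?N u) - 1" using e vu fin by (simp add: nb_remove card_minus1)
  have P_v: "card (?N' v) = card (?N v) - 1" using e vu fin by (simp add: nb_remove card_minus1)
  have wlog: "2 \<le> card (?N' x) \<or> 2 \<le> card (?N' y)"
    if y: "y \<in> ?N' x" and cx: "2 \<le> card (?N x)" for x y
  proof -
    have yx: "y \<in> ?N x" "y \<noteq> x" using y by (auto simp: nb_iff)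
    consider "x \<noteq> u \<and> x \<noteq> v" | "x = u" | "x = v" by blast
    then show ?thesis
    proof cases
      case 1 then show ?thesis using P_other cx by auto
    next
      case 2
      show ?thesis
      proof (cases "card (?N u) = 2")
        case True
        have "y \<noteq> v" using y 2 e by (auto simp: nb_remove)
        then have "2 \<le> card (?N y)" using cu True yx 2 by auto
        then show ?thesis using P_other[of y] \<open>y \<noteq> v\<close> yx 2 by auto
      next
        case False then show ?thesis using P_u du 2 by auto
      qed
    next
      case 3
      show ?thesis
      proof (cases "card (?N v) = 2")
        case True
        have "y \<noteq> u" using y 3 e by (auto simp: nb_remove)
        then have "2 \<le> card (?N y)" using cv True yx 3 by auto
        then show ?thesis using P_other[of y] \<open>y \<noteq> u\<close> yx 3 by auto
      next
        case False then show ?thesis using P_v dv 3 by auto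
      qed
    qed
  qed
  show ?thesis unfolding ok_def
  proof (intro ballI conjI)
    fix x assume x: "x \<in> V"
    show "?N' x \<noteq> {}"
    proof -
      have "?N x \<noteq> {}" using okE x by (simp add: ok_def)
      then show ?thesis using card2_ne[OF fin du, of v] card2_ne[OF fin dv, of u] e
        by (auto simp: nb_remove)
    qed
    fix y assume y: "y \<in> ?N' x"
    have "y \<in> ?N x" using y by (auto simp: nb_iff)
    then have "2 \<le> card (?N y) \<or> 2 \<le> card (?N x)" using okE x unfolding ok_def by blast
    moreover have "x \<in> ?N' y" using y nb_sym by metis
    ultimately show "2 \<le> card (?N' y) \<or> 2 \<le> card (?N' x)"
      using wlog[of y x] wlog[of x y] y by auto
  qed
qed

lemma leaf_removable:
  assumes sg: "simple_graph V E" and okE: "ok V E" and l: "l \<in> V" "neighbors E l = {p}"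
    and hp: "3 \<le> card (neighbors E p) \<or> (card (neighbors E p) = 2 \<and>
              (\<forall>q\<in>neighbors E p - {l}. 2 \<le> card (neighbors E q)))"
  shows "ok (V - {l}) (E - {{l,p}})" "simple_graph (V - {l}) (E - {{l,p}})"
proof -
  let ?N = "neighbors E" and ?N' = "neighbors (E - {{l,p}})"
  have fin: "finite (?N z)" for z using nb_finite[OF sg] .
  have lp: "l \<noteq> p" "p \<in> ?N l" "l \<in> ?N p" using l(2) nb_sym[of l E p] by (auto simp: nb_iff)
  have notl: "l \<notin> ?N x" if "x \<noteq> p" for x using that l(2) nb_sym[of l E x] by auto
  have P_other: "?N' z = ?N z" if "z \<noteq> l" "z \<noteq> p" for z
    using that lp by (simp add: nb_remove)
  have P_p: "card (?N' p) = card (?N p) - 1" using lp fin by (simp add: nb_remove card_minus1)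
  have dp: "2 \<le> card (?N p)" using hp by auto
  have wlog: "2 \<le> card (?N' x) \<or> 2 \<le> card (?N' y)"
    if y: "y \<in> ?N' x" and xl: "x \<noteq> l" and yl: "y \<noteq> l" and cx: "2 \<le> card (?N x)" for x y
  proof (cases "x = p")
    case False then show ?thesis using P_other[OF xl] cx by auto
  next
    case True
    show ?thesis
    proof (cases "3 \<le> card (?N p)")
      case True then show ?thesis using P_p \<open>x = p\<close> by auto
    next
      case False
      then have c2: "card (?N p) = 2" "\<forall>q\<in>?N p - {l}. 2 \<le> card (?N q)" using hp by auto
      have "y \<in> ?N p" "y \<noteq> p" using y \<open>x = p\<close> by (auto simp: nb_iff)
      then have "2 \<le> card (?N y)" using c2 yl by auto
      then show ?thesis using P_other[OF yl \<open>y \<noteq> p\<close>] by auto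
    qed
  qed
  show "ok (V - {l}) (E - {{l,p}})" unfolding ok_def
  proof (intro ballI conjI)
    fix x assume x: "x \<in> V - {l}"
    show "?N' x \<noteq> {}"
    proof (cases "x = p")
      case True then show ?thesis using card2_ne[OF fin dp, of l] lp by (simp add: nb_remove)
    next
      case False
      have "?N x \<noteq> {}" using okE x by (simp add: ok_def)
      then show ?thesis using P_other[OF _ False] x by auto
    qed
    fix y assume y: "y \<in> ?N' x"
    have yN: "y \<in> ?N x" using y by (auto simp: nb_iff)
    have yl: "y \<noteq> l"
    proof
      assume "y = l"
      then have "x = p" using yN l(2) nb_sym[of y E x] by auto
      then show False using y \<open>y = l\<close> lp by (simp add: nb_remove)
    qed
    have "2 \<le> card (?N y) \<or> 2 \<le> card (?N x)" using okE x yN unfolding ok_def by blast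
    moreover have "x \<in> ?N' y" using y nb_sym by metis
    ultimately show "2 \<le> card (?N' y) \<or> 2 \<le> card (?N' x)"
      using wlog[of y x] wlog[of x y] y x yl by blast
  qed
  show "simple_graph (V - {l}) (E - {{l,p}})"
  proof (rule sg_del[OF sg])
    show "\<forall>e\<in>E - {{l, p}}. e \<inter> {l} = {}"
    proof
      fix e assume e: "e \<in> E - {{l,p}}"
      then obtain a b where ab: "e = {a,b}" "a \<noteq> b" using sg unfolding simple_graph_def by blast
      show "e \<inter> {l} = {}"
      proof (rule ccontr)
        assume "e \<inter> {l} \<noteq> {}"
        then have "l = a \<or> l = b" using ab by auto
        then show False
        proof
          assume "l = a"
          then have "b \<in> ?N l" using e ab by (auto simp: nb_iff)
          then show False using e ab l(2) \<open>l = a\<close> by auto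
        next
          assume "l = b"
          then have "a \<in> ?N l" using e ab by (auto simp: nb_iff insert_commute)
          then show False using e ab l(2) \<open>l = b\<close> by (auto simp: insert_commute)
        qed
      qed
    qed
  qed auto
qed

lemma P3_removable:
  assumes sg: "simple_graph V E" and okE: "ok V E" and abc: "a \<noteq> b"
    "neighbors E a = {c}" "neighbors E b = {c}" "neighbors E c = {a,b}"
  shows "ok (V - {a,b,c}) (E - {{a,c},{b,c}})" "simple_graph (V - {a,b,c}) (E - {{a,c},{b,c}})"
proof -
  let ?N = "neighbors E" and ?N' = "neighbors (E - {{a,c},{b,c}})"
  have out: "y \<notin> {a,b,c}" if "y \<in> ?N x" "x \<notin> {a,b,c}" for x y
    using that abc nb_sym[of y E x] by auto
  have same: "?N' x = ?N x" if "x \<notin> {a,b,c}" for x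
  proof
    show "?N' x \<subseteq> ?N x" by (auto simp: nb_iff)
    show "?N x \<subseteq> ?N' x"
    proof
      fix y assume y: "y \<in> ?N x"
      then have "y \<notin> {a,b,c}" using out that by blast
      then show "y \<in> ?N' x" using y that by (auto simp: nb_iff doubleton_eq_iff)
    qed
  qed
  show "ok (V - {a,b,c}) (E - {{a,c},{b,c}})" unfolding ok_def
  proof (intro ballI conjI)
    fix x assume x: "x \<in> V - {a,b,c}"
    then have x': "x \<notin> {a,b,c}" by auto
    show "?N' x \<noteq> {}" using okE x same[OF x'] by (simp add: ok_def)
    fix y assume y: "y \<in> ?N' x"
    then have yN: "y \<in> ?N x" using same[OF x'] by simp
    then have "y \<notin> {a,b,c}" using out x' by blast
    then show "2 \<le> card (?N' y) \<or> 2 \<le> card (?N' x)"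
      using okE x yN same[OF x'] same[of y] unfolding ok_def by auto
  qed
  show "simple_graph (V - {a,b,c}) (E - {{a,c},{b,c}})"
  proof (rule sg_del[OF sg])
    show "\<forall>e\<in>E - {{a,c},{b,c}}. e \<inter> {a,b,c} = {}"
    proof
      fix e assume e: "e \<in> E - {{a,c},{b,c}}"
      then obtain u v where uv: "e = {u,v}" "u \<noteq> v" using sg unfolding simple_graph_def by blast
      have vu: "v \<in> ?N u" "u \<in> ?N v" using e uv by (auto simp: nb_iff insert_commute)
      have "u \<notin> {a,b,c}"
      proof
        assume "u \<in> {a,b,c}"
        then have "e = {a,c} \<or> e = {b,c}" using vu abc uv by (auto simp: insert_commute)
        then show False using e by auto
      qed
      moreover have "v \<notin> {a,b,c}"
      proof
        assume "v \<in> {a,b,c}"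
        then have "e = {a,c} \<or> e = {b,c}" using vu abc uv by (auto simp: insert_commute)
        then show False using e by auto
      qed
      ultimately show "e \<inter> {a,b,c} = {}" using uv by auto
    qed
  qed auto
qed

lemma nb_symD: "u \<in> neighbors E v \<Longrightarrow> v \<in> neighbors E u"
  using nb_sym by metis

lemma card2_eq: assumes "finite A" "card A = 2" "x \<in> A" "q \<in> A" "x \<noteq> q" shows "A = {x,q}"
proof -
  have "{x,q} \<subseteq> A" using assms by auto
  moreover have "card {x,q} = card A" using assms by simp
  ultimately show ?thesis using card_subset_eq[OF assms(1)] by metis
qed

lemma card1_eq: assumes "finite A" "card A = 1" "x \<in> A" shows "A = {x}"
proof -
  obtain a where "A = {a}" using assms(2) card_1_singletonE by blast
  then show ?thesis using assms(3) by simp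
qed

lemma no_reduction_False:
  assumes sg: "simple_graph V E" and okE: "ok V E" and ne: "V \<noteq> {}"
    and noB: "\<And>u v. {u,v} \<in> E \<Longrightarrow> u \<noteq> v \<Longrightarrow> \<not> ok V (E - {{u,v}})"
    and noC: "\<And>l p. l \<in> V \<Longrightarrow> neighbors E l = {p} \<Longrightarrow>
       \<not> (3 \<le> card (neighbors E p) \<or> (card (neighbors E p) = 2 \<and>
              (\<forall>q\<in>neighbors E p - {l}. 2 \<le> card (neighbors E q))))"
    and noD: "\<And>a b c. a \<in> V \<Longrightarrow> b \<in> V \<Longrightarrow> c \<in> V \<Longrightarrow> a \<noteq> b \<Longrightarrow>
       neighbors E a = {c} \<Longrightarrow> neighbors E b = {c} \<Longrightarrow> neighbors E c = {a,b} \<Longrightarrow> False"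
  shows False
proof -
  let ?N = "neighbors E"
  have fin: "finite (?N z)" for z using nb_finite[OF sg] .
  have inV: "y \<in> V" if "y \<in> ?N x" for x y using nb_subset[OF sg] that by blast
  have nz: "?N x \<noteq> {}" if "x \<in> V" for x using okE that by (simp add: ok_def)
  have d1: "1 \<le> card (?N x)" if "x \<in> V" for x using nz[OF that] fin[of x]
    by (simp add: Suc_leI card_gt_0_iff)
  have okx: "2 \<le> card (?N y) \<or> 2 \<le> card (?N x)" if "x \<in> V" "y \<in> ?N x" for x y
    using okE that unfolding ok_def by blast
  have edge: "{x,u} \<in> E" "x \<noteq> u" if "u \<in> ?N x" for x u using that by (auto simp: nb_iff)
  have i: "card (?N x) \<le> 2" if x: "x \<in> V" for x
  proof (rule ccontr)
    assume "\<not> ?thesis"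
    then have c3: "3 \<le> card (?N x)" by simp
    obtain u where u: "u \<in> ?N x" using nz[OF x] by blast
    have xu: "x \<in> ?N u" using u by (rule nb_symD)
    show False
    proof (cases "card (?N u) = 1")
      case True
      then have "?N u = {x}" using card1_eq[OF fin _ xu] by blast
      then show False using noC[OF inV[OF u]] c3 by simp
    next
      case False
      then have du: "2 \<le> card (?N u)" using d1[OF inV[OF u]] by simp
      show False
      proof (cases "card (?N u) = 2 \<longrightarrow> (\<forall>q\<in>?N u - {x}. 2 \<le> card (?N q))")
        case True
        have "ok V (E - {{x,u}})"
          by (rule edge_removable[OF sg okE edge[OF u]]) (use c3 du True in auto)
        then show False using noB edge[OF u] by blast
      next
        case False
        then have "card (?N u) = 2" "\<exists>q\<in>?N u - {x}. \<not> 2 \<le> card (?N q)" by auto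
        then obtain q where q: "card (?N u) = 2" "q \<in> ?N u" "q \<noteq> x" "card (?N q) < 2"
          by (auto simp: not_le)
        have qV: "q \<in> V" using inV q(2) by blast
        have "card (?N q) = 1" using d1[OF qV] q by simp
        moreover have "u \<in> ?N q" using q(2) by (rule nb_symD)
        ultimately have Nq: "?N q = {u}" using card1_eq[OF fin] by blast
        have "?N u = {x,q}" using card2_eq[OF fin q(1) xu q(2)] q(3) by simp
        then have "\<forall>q'\<in>?N u - {q}. 2 \<le> card (?N q')" using c3 q(3) by auto
        then show False using noC[OF qV Nq] q(1) by blast
      qed
    qed
  qed
  have ii: "card (?N x) \<noteq> 1" if x: "x \<in> V" for x
  proof
    assume c1: "card (?N x) = 1"
    obtain p where p: "p \<in> ?N x" using nz[OF x] by blast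
    have Nx: "?N x = {p}" using card1_eq[OF fin c1 p] .
    have pV: "p \<in> V" using inV p by blast
    have xp: "x \<in> ?N p" using p by (rule nb_symD)
    have "2 \<le> card (?N p)" using okx[OF x p] c1 by simp
    then have c2: "card (?N p) = 2" using i[OF pV] by simp
    obtain q where q: "q \<in> ?N p - {x}" using card2_ne[OF fin, of p x] c2 by auto
    have Np: "?N p = {x,q}" using card2_eq[OF fin c2 xp, of q] q by auto
    have "\<not> (\<forall>q'\<in>?N p - {x}. 2 \<le> card (?N q'))" using noC[OF x Nx] c2 by simp
    then have "card (?N q) < 2" using Np q by auto
    moreover have qV: "q \<in> V" using inV q by blast
    ultimately have "card (?N q) = 1" using d1[OF qV] by simp
    moreover have "p \<in> ?N q" using q by (blast intro: nb_symD)
    ultimately have Nq: "?N q = {p}" using card1_eq[OF fin] by blast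
    show False using noD[OF x qV pV _ Nx Nq] Np q by auto
  qed
  have deg2: "card (?N x) = 2" if "x \<in> V" for x using i[OF that] ii[OF that] d1[OF that] by simp
  obtain v where v: "v \<in> V" using ne by blast
  obtain u where u: "u \<in> ?N v" using nz[OF v] by blast
  have uV: "u \<in> V" using inV u by blast
  have all2: "\<forall>q\<in>?N z - {y}. 2 \<le> card (?N q)" for z y
  proof
    fix q assume "q \<in> ?N z - {y}"
    then have "q \<in> V" using inV by blast
    then show "2 \<le> card (?N q)" using deg2 by simp
  qed
  have "ok V (E - {{v,u}})"
    by (rule edge_removable[OF sg okE edge[OF u]]) (simp_all add: deg2[OF v] deg2[OF uV] all2)
  then show False using noB edge[OF u] by blast
qed

lemma big_mono: "big T n \<Longrightarrow> m \<le> n \<Longrightarrow> big T m"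
  unfolding big_def by auto

lemma main:
  "simple_graph V E \<Longrightarrow> ok V E \<Longrightarrow> big TYPE('a) (card V) \<Longrightarrow>
    \<exists>f :: 'v set \<Rightarrow> 'a::ab_group_add. good V E f"
proof (induction "card V + card E" arbitrary: V E rule: less_induct)
  case less
  note sg = less.prems(1) and okE = less.prems(2) and bg = less.prems(3)
  let ?N = "neighbors E"
  have fV: "finite V" using sg by (simp add: simple_graph_def)
  have fE: "finite E" using E_finite[OF sg] .
  have inV: "y \<in> V" if "y \<in> ?N x" for x y using nb_subset[OF sg] that by blast
  show ?case
  proof (cases "V = {}")
    case True
    then have "E = {}" using sg unfolding simple_graph_def by blast
    then have "good V E (\<lambda>_. 0 :: 'a)" using True by (simp add: good_def)
    then show ?thesis by blast
  next
    case ne: False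
    show ?thesis
    proof (cases "\<exists>u v. {u,v} \<in> E \<and> u \<noteq> v \<and> ok V (E - {{u,v}})")
      case True
      then obtain u v where uv: "{u,v} \<in> E" "u \<noteq> v" "ok V (E - {{u,v}})" by blast
      have lt: "card V + card (E - {{u,v}}) < card V + card E"
        using card_Diff1_less[OF fE uv(1)] by simp
      obtain f0 :: "'v set \<Rightarrow> 'a" where "good V (E - {{u,v}}) f0"
        using less.hyps[OF lt sg_sub[OF sg, of "E - {{u,v}}"] uv(3) bg] by blast
      moreover have "v \<in> ?N u" "u \<in> ?N v" using uv by (auto simp: nb_iff insert_commute)
      then have "u \<in> V" "v \<in> V" using inV by blast+
      ultimately show ?thesis using step_edge[OF sg uv(1,2)] bg by blast
    next
      case noB: False
      show ?thesis
      proof (cases "\<exists>l p. l \<in> V \<and> ?N l = {p} \<and> (3 \<le> card (?N p) \<or> (card (?N p) = 2 \<and>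
              (\<forall>q\<in>?N p - {l}. 2 \<le> card (?N q))))")
        case True
        then obtain l p where lp: "l \<in> V" "?N l = {p}" "3 \<le> card (?N p) \<or> (card (?N p) = 2 \<and>
              (\<forall>q\<in>?N p - {l}. 2 \<le> card (?N q)))" by blast
        note R = leaf_removable[OF sg okE lp]
        have "{l,p} \<in> E" using lp(2) by (auto simp: nb_iff)
        then have lt: "card (V - {l}) + card (E - {{l,p}}) < card V + card E"
          using card_Diff1_less[OF fE] card_Diff1_less[OF fV lp(1)] by fastforce
        have "big TYPE('a) (card (V - {l}))" using bg big_mono by (metis card_Diff1_le)
        then obtain f0 :: "'v set \<Rightarrow> 'a" where "good (V - {l}) (E - {{l,p}}) f0"
          using less.hyps[OF lt R(2) R(1)] by blast
        then show ?thesis using step_leaf[OF sg lp(1,2)] bg by blast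
      next
        case noC: False
        show ?thesis
        proof (cases "\<exists>a b c. a \<in> V \<and> b \<in> V \<and> c \<in> V \<and> a \<noteq> b \<and>
              ?N a = {c} \<and> ?N b = {c} \<and> ?N c = {a,b}")
          case True
          then obtain a b c where abc: "a \<in> V" "b \<in> V" "c \<in> V" "a \<noteq> b"
              "?N a = {c}" "?N b = {c}" "?N c = {a,b}" by blast
          note R = P3_removable[OF sg okE abc(4-7)]
          have lt: "card (V - {a,b,c}) + card (E - {{a,c},{b,c}}) < card V + card E"
          proof -
            have "card (V - {a,b,c}) < card V" using abc(1) fV by (intro psubset_card_mono) auto
            moreover have "card (E - {{a,c},{b,c}}) \<le> card E" using fE by (intro card_mono) auto
            ultimately show ?thesis by simp
          qed
          have "big TYPE('a) (card (V - {a,b,c}))" using bg big_mono fV by (metis card_mono Diff_subset)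
          then obtain f0 :: "'v set \<Rightarrow> 'a" where "good (V - {a,b,c}) (E - {{a,c},{b,c}}) f0"
            using less.hyps[OF lt R(2) R(1)] by blast
          then show ?thesis using step_P3[OF sg abc] bg by blast
        next
          case False
          have False
          proof (rule no_reduction_False[OF sg okE ne])
            show "\<And>u v. {u,v} \<in> E \<Longrightarrow> u \<noteq> v \<Longrightarrow> \<not> ok V (E - {{u,v}})" using noB by blast
            show "\<And>l p. l \<in> V \<Longrightarrow> ?N l = {p} \<Longrightarrow>
              \<not> (3 \<le> card (?N p) \<or> (card (?N p) = 2 \<and> (\<forall>q\<in>?N p - {l}. 2 \<le> card (?N q))))"
              using noC by blast
            show "\<And>a b c. a \<in> V \<Longrightarrow> b \<in> V \<Longrightarrow> c \<in> V \<Longrightarrow> a \<noteq> b \<Longrightarrow>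
              ?N a = {c} \<Longrightarrow> ?N b = {c} \<Longrightarrow> ?N c = {a,b} \<Longrightarrow> False" using False by blast
          qed
          then show ?thesis ..
        qed
      qed
    qed
  qed
qed

theorem theorem3:
  fixes V :: "'v set" and E :: "'v set set"
  assumes "simple_graph V E"
    and "\<forall>v\<in>V. card (component E v) \<ge> 3"
    and "infinite (UNIV :: 'a::ab_group_add set) \<or> 2 * card V \<le> card (UNIV :: 'a set)"
  shows "\<exists>f :: 'v set \<Rightarrow> 'a. (\<forall>e\<in>E. f e \<noteq> 0) \<and> inj_on (weight E f) V
           \<and> (\<forall>v\<in>V. weight E f v \<noteq> 0)"
proof -
  have "ok V E" using comp_ok assms by blast
  moreover have "big TYPE('a) (card V)" using assms(3) by (simp add: big_def)
  ultimately obtain f :: "'v set \<Rightarrow> 'a" where "good V E f" using main assms(1) by blast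
  then show ?thesis unfolding good_def by blast
qed

end
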